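(* Suppose $m=n$, $\Xi=\{\boldsymbol{\xi}\in\mathbb{R}^m:\boldsymbol{a}_k^{\top}\boldsymbol{\xi}\le d_k,\ k=1,\dots,l\}$ with $\boldsymbol{a}_k\in\mathbb{R}^m$, $d_k>0$, and $f_t(\boldsymbol{x},\boldsymbol{\xi})=\boldsymbol{\xi}^{\top}\boldsymbol{x}+\langle\boldsymbol{A}^t,\boldsymbol{\xi}\boldsymbol{\xi}^{\top}\rangle+(\boldsymbol{b}^t)^{\top}\boldsymbol{x}+h^t$ for all $t\in[T]$, where $\boldsymbol{A}^t\succeq0$ is symmetric, $\boldsymbol{b}^t\in\mathbb{R}^n$, $h^t\in\mathbb{R}$. Let $\tilde Z_{C_2}$ be the set of $\boldsymbol{x}\in\mathbb{R}^n$ for which there exist $\alpha_t>0$, $q_{it}\ge0$, $\boldsymbol{v}_{it}\in\mathbb{R}^m$ ($i\in[N],t\in[T]$) with, for all $i,t$, $\|\boldsymbol{v}_{it}\|_*\delta+\frac1N\sum_{j=1}^Nq_{jt}\le\epsilon\alpha_t$ and $\sup_{\boldsymbol{\xi}\in\Xi}[\boldsymbol{v}_{it}^{\top}\boldsymbol{\xi}-f_t(\boldsymbol{x},\boldsymbol{\xi})]+\alpha_t-\boldsymbol{v}_{it}^{\top}\boldsymbol{\zeta}^i-q_{it}\le0$. Then $\tilde Z_{C_2}$ equals the set of $\boldsymbol{x}\in\mathbb{R}^n$ for which there exist $\alpha_t>0$, $q_{it}\ge0$, $\boldsymbol{v}_{it}\in\mathbb{R}^m$, $u_{it}\in\mathbb{R}$,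 $\nu^{it}_k\ge0$ ($i\in[N],t\in[T],k\in[l]$) such that for all $i\in[N],t\in[T]$: $$\|\boldsymbol{v}_{it}\|_*\delta+\frac1N\sum_{j=1}^Nq_{jt}\le\epsilon\alpha_t,\qquad u_{it}-[(\boldsymbol{b}^t)^{\top}\boldsymbol{x}+h^t]+\alpha_t-\boldsymbol{v}_{it}^{\top}\boldsymbol{\zeta}^i\le q_{it},$$ $$\begin{bmatrix}\boldsymbol{A}^t&-\frac12(\boldsymbol{v}_{it}-\boldsymbol{x}-\sum_{k=1}^l\nu^{it}_k\boldsymbol{a}_k)\\-\frac12(\boldsymbol{v}_{it}-\boldsymbol{x}-\sum_{k=1}^l\nu^{it}_k\boldsymbol{a}_k)^{\top}&u_{it}-\sum_{k=1}^l\nu^{it}_kd_k\end{bmatrix}\succeq0.$$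
   Context: Setting: $\epsilon\in(0,1)$, $\delta>0$, $[T]=\{1,\dots,T\}$, $[l]=\{1,\dots,l\}$; $\boldsymbol{\zeta}^1,\dots,\boldsymbol{\zeta}^N\in\Xi$ given samples; $\|\cdot\|_*$ is the dual norm of a norm on $\mathbb{R}^m$; $\langle\boldsymbol{X},\boldsymbol{Y}\rangle=\mathrm{tr}(\boldsymbol{X}\boldsymbol{Y})$; $\succeq0$ denotes positive semidefiniteness. *)

theory Defs
  imports "HOL-Analysis.Analysis"
begin

definition is_norm :: "(real^'n \<Rightarrow> real) \<Rightarrow> bool" where
  "is_norm nrm \<longleftrightarrow> (\<forall>x. 0 \<le> nrm x) \<and> (\<forall>x. nrm x = 0 \<longleftrightarrow> x = 0)
     \<and> (\<forall>c x. nrm (c *\<^sub>R x) = \<bar>c\<bar> * nrm x) \<and> (\<forall>x y. nrm (x + y) \<le> nrm x + nrm y)"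

definition dual_norm :: "(real^'n \<Rightarrow> real) \<Rightarrow> real^'n \<Rightarrow> real" where
  "dual_norm nrm v = Sup {v \<bullet> \<xi> | \<xi>. nrm \<xi> \<le> 1}"

definition psd :: "real^'k^'k \<Rightarrow> bool" where
  "psd M \<longleftrightarrow> transpose M = M \<and> (\<forall>x. 0 \<le> x \<bullet> (M *v x))"

definition outer :: "real^'n \<Rightarrow> real^'n \<Rightarrow> real^'n^'n" where
  "outer x y = (\<chi> i j. x $ i * y $ j)"

definition mat_inner :: "real^'n^'n \<Rightarrow> real^'n^'n \<Rightarrow> real" where
  "mat_inner X Y = trace (X ** Y)"

text \<open>Block matrix [[M, w],[w^T, c]] of size (m+1)x(m+1), indexed by 'n option
  (None is the extra last index).\<close>
definition block_mat :: "real^'n^'n \<Rightarrow> real^'n \<Rightarrow> real \<Rightarrow> real^('n option)^('n option)" where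
  "block_mat M w c = (\<chi> i j. case (i, j) of
      (Some i', Some j') \<Rightarrow> M $ i' $ j'
    | (Some i', None) \<Rightarrow> w $ i'
    | (None, Some j') \<Rightarrow> w $ j'
    | (None, None) \<Rightarrow> c)"

end

theory Submission imports Defs begin
lemma mat_inner_outer: "mat_inner (A::real^'n^'n) (outer x x) = x \<bullet> (A *v x)"
  by (simp add: mat_inner_def outer_def trace_def matrix_matrix_mult_def inner_vec_def
      matrix_vector_mult_def sum_distrib_left mult.commute mult.left_commute)

lemma block_quad:
  fixes M :: "real^'n^'n" and z :: "real^('n option)"
  shows "z \<bullet> (block_mat M w c *v z) =
     (\<chi> j. z $ Some j) \<bullet> (M *v (\<chi> j. z $ Some j)) + 2 * (z $ None) * (w \<bullet> (\<chi> j. z $ Some j))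
       + (z $ None)^2 * c"
proof -
  have S: "\<And>F :: 'n option \<Rightarrow> real. sum F UNIV = F None + (\<Sum>j\<in>UNIV. F (Some j))"
    by (simp add: UNIV_option_conv sum.reindex)
  show ?thesis
    by (simp add: inner_vec_def matrix_vector_mult_def block_mat_def S sum.distrib
        sum_distrib_left sum_distrib_right power2_eq_square algebra_simps)
qed

lemma block_sym:
  assumes "transpose M = M"
  shows "transpose (block_mat M w c) = block_mat M w c"
  using assms unfolding transpose_def block_mat_def vec_eq_iff
  by (auto split: option.splits)

lemma quad_concave:
  fixes A :: "real^'n^'n"
  shows "\<theta> * (x \<bullet> (A *v x)) + (1-\<theta>) * (y \<bullet> (A *v y))
     - (\<theta> *\<^sub>R x + (1-\<theta>) *\<^sub>R y) \<bullet> (A *v (\<theta> *\<^sub>R x + (1-\<theta>) *\<^sub>R y))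
     = \<theta> * (1-\<theta>) * ((x - y) \<bullet> (A *v (x - y)))"
  by (simp add: algebra_simps inner_add_left inner_add_right inner_diff_left inner_diff_right power2_eq_square)

lemma sup_le1:
  assumes "\<forall>\<xi>\<in>S. y \<xi> \<le> - c"
  shows "(SUP \<xi>\<in>S. ereal (y \<xi>)) + ereal c \<le> 0"
proof -
  have "(SUP \<xi>\<in>S. ereal (y \<xi>)) \<le> ereal (- c)" using assms by (intro SUP_least) auto
  hence "(SUP \<xi>\<in>S. ereal (y \<xi>)) + ereal c \<le> ereal (- c) + ereal c" by (rule add_right_mono)
  thus ?thesis by (simp add: zero_ereal_def)
qed

lemma sup_le2:
  assumes "(SUP \<xi>\<in>S. ereal (y \<xi>)) + ereal c \<le> 0" "\<xi> \<in> S"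
  shows "y \<xi> \<le> - c"
proof -
  have "ereal (y \<xi>) \<le> (SUP \<xi>\<in>S. ereal (y \<xi>))" using assms(2) by (rule SUP_upper)
  hence "ereal (y \<xi>) + ereal c \<le> (SUP \<xi>\<in>S. ereal (y \<xi>)) + ereal c" by (rule add_right_mono)
  hence "ereal (y \<xi> + c) \<le> ereal 0" using assms(1) unfolding zero_ereal_def
    by (metis order_trans plus_ereal.simps(1))
  thus ?thesis by simp
qed

lemma blk_psd:
  assumes "psd (M::real^'n^'n)"
  shows "psd (block_mat M (-(1/2) *\<^sub>R W) c) \<longleftrightarrow> (\<forall>\<xi>. W \<bullet> \<xi> - \<xi> \<bullet> (M *v \<xi>) \<le> c)"
proof
  assume p: "psd (block_mat M (-(1/2) *\<^sub>R W) c)"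
  show "\<forall>\<xi>. W \<bullet> \<xi> - \<xi> \<bullet> (M *v \<xi>) \<le> c"
  proof
    fix \<xi> :: "real^'n"
    define z :: "real^('n option)" where "z = (\<chi> i. case i of None \<Rightarrow> 1 | Some j \<Rightarrow> \<xi> $ j)"
    have zs: "(\<chi> j. z $ Some j) = \<xi>" "z $ None = 1" by (simp_all add: z_def vec_eq_iff)
    have "0 \<le> z \<bullet> (block_mat M (-(1/2) *\<^sub>R W) c *v z)" using p by (simp add: psd_def)
    then show "W \<bullet> \<xi> - \<xi> \<bullet> (M *v \<xi>) \<le> c" unfolding block_quad zs by simp
  qed
next
  assume h: "\<forall>\<xi>. W \<bullet> \<xi> - \<xi> \<bullet> (M *v \<xi>) \<le> c"
  have sym: "transpose M = M" and nn: "\<And>y. 0 \<le> y \<bullet> (M *v y)" using assms by (auto simp: psd_def)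
  show "psd (block_mat M (-(1/2) *\<^sub>R W) c)"
    unfolding psd_def
  proof (intro conjI allI block_sym[OF sym])
    fix z :: "real^('n option)"
    define y where "y = (\<chi> j. z $ Some j)"
    define s where "s = z $ None"
    have "0 \<le> y \<bullet> (M *v y) - s * (W \<bullet> y) + s^2 * c"
    proof (cases "s = 0")
      case True then show ?thesis using nn by simp
    next
      case False
      have "W \<bullet> ((1/s) *\<^sub>R y) - ((1/s) *\<^sub>R y) \<bullet> (M *v ((1/s) *\<^sub>R y)) \<le> c" using h by blast
      hence "(W \<bullet> y) / s - (y \<bullet> (M *v y)) / s^2 \<le> c"
        by (simp add: matrix_vector_mult_scaleR power2_eq_square)
      hence "s^2 * ((W \<bullet> y) / s - (y \<bullet> (M *v y)) / s^2) \<le> s^2 * c"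
        by (intro mult_left_mono) auto
      moreover have "\<And>p q::real. s^2 * (p / s - q / s^2) = s * p - q"
        using False by (simp add: right_diff_distrib power2_eq_square)
      ultimately have "s * (W \<bullet> y) - y \<bullet> (M *v y) \<le> s^2 * c" by simp
      then show ?thesis by linarith
    qed
    then show "0 \<le> z \<bullet> (block_mat M (-(1/2) *\<^sub>R W) c *v z)"
      unfolding block_quad y_def[symmetric] s_def[symmetric] by simp
  qed
qed

lemma one_constraint:
  fixes g hh :: "'a::real_vector \<Rightarrow> real" and D :: "'a set"
  assumes convD: "\<forall>x\<in>D. \<forall>y\<in>D. \<forall>\<theta>::real. 0\<le>\<theta> \<and> \<theta>\<le>1 \<longrightarrow> \<theta> *\<^sub>R x + (1-\<theta>) *\<^sub>R y \<in> D"
  and conc: "\<forall>x\<in>D. \<forall>y\<in>D. \<forall>\<theta>. 0\<le>\<theta> \<and> \<theta>\<le>1 \<longrightarrow> \<theta> * g x + (1-\<theta>) * g y \<le> g (\<theta> *\<^sub>R x + (1-\<theta>) *\<^sub>R y)"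
  and aff: "\<forall>x y \<theta>. hh (\<theta> *\<^sub>R x + (1-\<theta>) *\<^sub>R y) = \<theta> * hh x + (1-\<theta>) * hh y"
  and x0: "x0 \<in> D" "hh x0 < 0"
  and bound: "\<forall>x\<in>D. hh x \<le> 0 \<longrightarrow> g x \<le> M"
  shows "\<exists>lam\<ge>0. \<forall>x\<in>D. g x - lam * hh x \<le> M"
proof -
  have key: "(g x - M) / hh x \<le> (M - g x') / (- hh x')"
    if x: "x \<in> D" "hh x > 0" and x': "x' \<in> D" "hh x' < 0" for x x'
  proof -
    define \<theta> where "\<theta> = - hh x' / (hh x - hh x')"
    have th: "0 \<le> \<theta>" "\<theta> \<le> 1" using x x' by (auto simp: \<theta>_def field_simps)
    define z where "z = \<theta> *\<^sub>R x + (1-\<theta>) *\<^sub>R x'"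
    have zD: "z \<in> D" using convD x x' th z_def by blast
    have "hh z = \<theta> * hh x + (1-\<theta>) * hh x'" using aff z_def by simp
    also have "\<dots> = 0" using x x' by (simp add: \<theta>_def field_simps)
    finally have "g z \<le> M" using bound zD by simp
    moreover have "\<theta> * g x + (1-\<theta>) * g x' \<le> g z" using conc x x' th z_def by blast
    ultimately have "\<theta> * g x + (1-\<theta>) * g x' \<le> M" by linarith
    moreover have "\<theta> * g x + (1-\<theta>) * g x' = ((- hh x') * g x + hh x * g x') / (hh x - hh x')"
    proof -
      have ne: "hh x - hh x' > 0" using x x' by linarith
      have t1: "1-\<theta> = hh x / (hh x - hh x')" using ne by (simp add: \<theta>_def field_simps)
      have gen: "\<And>p r c u w::real. (p/c)*u + (r/c)*w = (p*u+r*w)/c" by (simp add: add_divide_distrib)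
      show ?thesis unfolding t1 unfolding \<theta>_def gen by simp
    qed
    ultimately have "((- hh x') * g x + hh x * g x') / (hh x - hh x') \<le> M" by simp
    hence "(- hh x') * g x + hh x * g x' \<le> M * (hh x - hh x')"
      using x x' by (simp add: pos_divide_le_eq)
    hence "(g x - M) * (- hh x') \<le> (M - g x') * hh x" by (simp add: algebra_simps)
    thus ?thesis using x x' by (simp add: field_simps)
  qed
  define S where "S = insert 0 {(g x - M) / hh x | x. x \<in> D \<and> hh x > 0}"
  define lam where "lam = Sup S"
  have bdd: "bdd_above S"
    unfolding S_def bdd_above_def
    apply (rule exI[of _ "max 0 ((M - g x0) / (- hh x0))"])
    using key x0 by (auto intro: max.coboundedI2)
  have l0: "lam \<ge> 0" unfolding lam_def by (rule cSup_upper[OF _ bdd]) (simp add: S_def)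
  show ?thesis
  proof (intro exI[of _ lam] conjI l0 ballI)
    fix x assume xD: "x \<in> D"
    consider "hh x > 0" | "hh x = 0" | "hh x < 0" by linarith
    then show "g x - lam * hh x \<le> M"
    proof cases
      case 1
      have "(g x - M) / hh x \<le> lam" unfolding lam_def
        by (rule cSup_upper[OF _ bdd]) (use xD 1 in \<open>auto simp: S_def\<close>)
      then show ?thesis using 1 by (simp add: field_simps)
    next
      case 2 then show ?thesis using bound xD by simp
    next
      case 3
      have gx: "g x \<le> M" using bound xD 3 by simp
      have "lam \<le> (M - g x) / (- hh x)" unfolding lam_def
        apply (rule cSup_least)
        using key[OF _ _ xD 3] divide_nonneg_pos[of "M - g x" "- hh x"] gx 3 by (auto simp: S_def)
      then show ?thesis using 3 by (simp add: field_simps)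
    qed
  qed
qed

lemma multi_constraint:
  fixes g :: "'a::real_inner \<Rightarrow> real" and a :: "'i \<Rightarrow> 'a"
  assumes "finite I"
  and "\<forall>x y \<theta>. 0\<le>\<theta> \<and> \<theta>\<le>1 \<longrightarrow> \<theta> * g x + (1-\<theta>) * g y \<le> g (\<theta> *\<^sub>R x + (1-\<theta>) *\<^sub>R y)"
  and "\<forall>k\<in>I. a k \<bullet> x0 < d k"
  and "\<forall>x. (\<forall>k\<in>I. a k \<bullet> x \<le> d k) \<longrightarrow> g x \<le> M"
  shows "\<exists>\<nu>. (\<forall>k\<in>I. 0 \<le> \<nu> k) \<and> (\<forall>x. g x + (\<Sum>k\<in>I. \<nu> k * (d k - a k \<bullet> x)) \<le> M)"
  using assms
proof (induction I arbitrary: g rule: finite_induct)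
  case empty then show ?case by simp
next
  case (insert j J)
  define D where "D = {x. \<forall>k\<in>J. a k \<bullet> x \<le> d k}"
  define hh where "hh x = a j \<bullet> x - d j" for x
  have convD: "\<forall>x\<in>D. \<forall>y\<in>D. \<forall>\<theta>::real. 0\<le>\<theta> \<and> \<theta>\<le>1 \<longrightarrow> \<theta> *\<^sub>R x + (1-\<theta>) *\<^sub>R y \<in> D"
  proof (intro ballI allI impI)
    fix x y and \<theta> :: real assume xy: "x \<in> D" "y \<in> D" "0\<le>\<theta> \<and> \<theta>\<le>1"
    show "\<theta> *\<^sub>R x + (1-\<theta>) *\<^sub>R y \<in> D" unfolding D_def
    proof (intro CollectI ballI)
      fix k assume k: "k \<in> J"
      have "\<theta> * (a k \<bullet> x) \<le> \<theta> * d k" using xy k by (intro mult_left_mono) (auto simp: D_def)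
      moreover have "(1-\<theta>) * (a k \<bullet> y) \<le> (1-\<theta>) * d k" using xy k by (intro mult_left_mono) (auto simp: D_def)
      ultimately show "a k \<bullet> (\<theta> *\<^sub>R x + (1-\<theta>) *\<^sub>R y) \<le> d k"
        by (simp add: inner_add_right algebra_simps)
    qed
  qed
  have aff: "\<forall>x y \<theta>. hh (\<theta> *\<^sub>R x + (1-\<theta>) *\<^sub>R y) = \<theta> * hh x + (1-\<theta>) * hh y"
    by (simp add: hh_def inner_add_right algebra_simps)
  have x0: "x0 \<in> D" "hh x0 < 0" using insert.prems(2) by (auto simp: D_def hh_def)
  have bnd: "\<forall>x\<in>D. hh x \<le> 0 \<longrightarrow> g x \<le> M" using insert.prems(3) by (auto simp: D_def hh_def)
  obtain lam where l: "lam \<ge> 0" "\<forall>x\<in>D. g x - lam * hh x \<le> M"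
    using one_constraint[OF convD _ aff x0 bnd] insert.prems(1) by blast
  define g' where "g' x = g x - lam * hh x" for x
  have conc': "\<forall>x y \<theta>. 0\<le>\<theta> \<and> \<theta>\<le>1 \<longrightarrow> \<theta> * g' x + (1-\<theta>) * g' y \<le> g' (\<theta> *\<^sub>R x + (1-\<theta>) *\<^sub>R y)"
  proof (intro allI impI)
    fix x y \<theta> assume "0\<le>(\<theta>::real) \<and> \<theta>\<le>1"
    then have "\<theta> * g x + (1-\<theta>) * g y \<le> g (\<theta> *\<^sub>R x + (1-\<theta>) *\<^sub>R y)" using insert.prems(1) by blast
    then show "\<theta> * g' x + (1-\<theta>) * g' y \<le> g' (\<theta> *\<^sub>R x + (1-\<theta>) *\<^sub>R y)"
      unfolding g'_def aff[rule_format] by (simp add: algebra_simps)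
  qed
  obtain \<nu> where nu: "\<forall>k\<in>J. 0 \<le> \<nu> k" "\<forall>x. g' x + (\<Sum>k\<in>J. \<nu> k * (d k - a k \<bullet> x)) \<le> M"
    using insert.IH[OF conc'] insert.prems(2) l(2) by (auto simp: D_def g'_def)
  show ?case
  proof (intro exI[of _ "\<nu>(j := lam)"] conjI allI ballI)
    fix k assume "k \<in> insert j J" then show "0 \<le> (\<nu>(j := lam)) k" using nu l by auto
  next
    fix x
    have "(\<Sum>k\<in>insert j J. (\<nu>(j := lam)) k * (d k - a k \<bullet> x))
       = lam * (d j - a j \<bullet> x) + (\<Sum>k\<in>J. \<nu> k * (d k - a k \<bullet> x))"
      using insert.hyps by (simp add: sum.insert) (intro sum.cong, auto)
    then show "g x + (\<Sum>k\<in>insert j J. (\<nu>(j := lam)) k * (d k - a k \<bullet> x)) \<le> M"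
      using nu(2)[rule_format, of x] by (simp add: g'_def hh_def algebra_simps)
  qed
qed

theorem proposition2:
  fixes nrm :: "real^'n \<Rightarrow> real"
    and \<epsilon> \<delta> :: real and N T l :: nat
    and \<zeta> :: "nat \<Rightarrow> real^'n"
    and a :: "nat \<Rightarrow> real^'n" and d :: "nat \<Rightarrow> real"
    and A :: "nat \<Rightarrow> real^'n^'n" and b :: "nat \<Rightarrow> real^'n" and h :: "nat \<Rightarrow> real"
    and \<Xi> :: "(real^'n) set" and f :: "nat \<Rightarrow> real^'n \<Rightarrow> real^'n \<Rightarrow> real"
  assumes "is_norm nrm"
    and "0 < \<epsilon>" "\<epsilon> < 1" "0 < \<delta>" "0 < N"
    and "\<forall>i\<in>{1..N}. \<zeta> i \<in> \<Xi>"
    and "\<Xi> = {\<xi>. \<forall>k\<in>{1..l}. a k \<bullet> \<xi> \<le> d k}"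
    and "\<forall>k\<in>{1..l}. 0 < d k"
    and "\<forall>t\<in>{1..T}. psd (A t)"
    and "\<And>t x \<xi>. f t x \<xi> = \<xi> \<bullet> x + mat_inner (A t) (outer \<xi> \<xi>) + b t \<bullet> x + h t"
  shows
   "{x. \<exists>(\<alpha>::nat \<Rightarrow> real) (q::nat \<Rightarrow> nat \<Rightarrow> real) (v::nat \<Rightarrow> nat \<Rightarrow> real^'n).
        (\<forall>t\<in>{1..T}. 0 < \<alpha> t) \<and>
        (\<forall>i\<in>{1..N}. \<forall>t\<in>{1..T}. 0 \<le> q i t) \<and>
        (\<forall>i\<in>{1..N}. \<forall>t\<in>{1..T}.
            dual_norm nrm (v i t) * \<delta> + (1 / real N) * (\<Sum>j=1..N. q j t) \<le> \<epsilon> * \<alpha> t \<and>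
            (SUP \<xi>\<in>\<Xi>. ereal (v i t \<bullet> \<xi> - f t x \<xi>))
               + ereal (\<alpha> t - v i t \<bullet> \<zeta> i - q i t) \<le> 0)}
    = {x. \<exists>(\<alpha>::nat \<Rightarrow> real) (q::nat \<Rightarrow> nat \<Rightarrow> real) (v::nat \<Rightarrow> nat \<Rightarrow> real^'n)
          (u::nat \<Rightarrow> nat \<Rightarrow> real) (\<nu>::nat \<Rightarrow> nat \<Rightarrow> nat \<Rightarrow> real).
        (\<forall>t\<in>{1..T}. 0 < \<alpha> t) \<and>
        (\<forall>i\<in>{1..N}. \<forall>t\<in>{1..T}. 0 \<le> q i t) \<and>
        (\<forall>i\<in>{1..N}. \<forall>t\<in>{1..T}. \<forall>k\<in>{1..l}. 0 \<le> \<nu> i t k) \<and>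
        (\<forall>i\<in>{1..N}. \<forall>t\<in>{1..T}.
            dual_norm nrm (v i t) * \<delta> + (1 / real N) * (\<Sum>j=1..N. q j t) \<le> \<epsilon> * \<alpha> t \<and>
            u i t - (b t \<bullet> x + h t) + \<alpha> t - v i t \<bullet> \<zeta> i \<le> q i t \<and>
            psd (block_mat (A t)
                   (- (1/2) *\<^sub>R (v i t - x - (\<Sum>k=1..l. \<nu> i t k *\<^sub>R a k)))
                   (u i t - (\<Sum>k=1..l. \<nu> i t k * d k))))}"
proof -
  have fq: "\<And>t x \<xi>. f t x \<xi> = \<xi> \<bullet> x + \<xi> \<bullet> (A t *v \<xi>) + b t \<bullet> x + h t"
    using assms(10) mat_inner_outer by simp
  have Ps: "\<And>t. t \<in> {1..T} \<Longrightarrow> psd (A t)" using assms(9) by blast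
  have Qnn: "\<And>t y. t \<in> {1..T} \<Longrightarrow> 0 \<le> y \<bullet> (A t *v y)" using Ps psd_def by blast
  have sumlin: "\<And>(\<nu>::nat \<Rightarrow> real) \<xi>. (\<Sum>k=1..l. \<nu> k *\<^sub>R a k) \<bullet> \<xi> = (\<Sum>k=1..l. \<nu> k * (a k \<bullet> \<xi>))"
    by (simp add: inner_sum_left)
  have sumsplit: "\<And>(\<nu>::nat \<Rightarrow> real) \<xi>. (\<Sum>k=1..l. \<nu> k * (d k - a k \<bullet> \<xi>))
       = (\<Sum>k=1..l. \<nu> k * d k) - (\<Sum>k=1..l. \<nu> k * (a k \<bullet> \<xi>))"
    by (simp add: right_diff_distrib sum_subtractf)
  show ?thesis
  proof (intro set_eqI iffI)
    fix x assume "x \<in> {x. \<exists>(\<alpha>::nat \<Rightarrow> real) (q::nat \<Rightarrow> nat \<Rightarrow> real) (v::nat \<Rightarrow> nat \<Rightarrow> real^'n).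
        (\<forall>t\<in>{1..T}. 0 < \<alpha> t) \<and>
        (\<forall>i\<in>{1..N}. \<forall>t\<in>{1..T}. 0 \<le> q i t) \<and>
        (\<forall>i\<in>{1..N}. \<forall>t\<in>{1..T}.
            dual_norm nrm (v i t) * \<delta> + (1 / real N) * (\<Sum>j=1..N. q j t) \<le> \<epsilon> * \<alpha> t \<and>
            (SUP \<xi>\<in>\<Xi>. ereal (v i t \<bullet> \<xi> - f t x \<xi>))
               + ereal (\<alpha> t - v i t \<bullet> \<zeta> i - q i t) \<le> 0)}"
    then obtain \<alpha> q v where H1: "\<forall>t\<in>{1..T}. 0 < \<alpha> t" and H2: "\<forall>i\<in>{1..N}. \<forall>t\<in>{1..T}. 0 \<le> q i t"
      and H3: "\<forall>i\<in>{1..N}. \<forall>t\<in>{1..T}.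
            dual_norm nrm (v i t) * \<delta> + (1 / real N) * (\<Sum>j=1..N. q j t) \<le> \<epsilon> * \<alpha> t \<and>
            (SUP \<xi>\<in>\<Xi>. ereal (v i t \<bullet> \<xi> - f t x \<xi>))
               + ereal (\<alpha> t - v i t \<bullet> \<zeta> i - q i t) \<le> 0" by blast
    define M where "M i t = v i t \<bullet> \<zeta> i + q i t - \<alpha> t + b t \<bullet> x + h t" for i t
    define P where "P i t w \<longleftrightarrow> (\<forall>k\<in>{1..l}. 0 \<le> w k) \<and>
       (\<forall>\<xi>. (v i t - x) \<bullet> \<xi> - \<xi> \<bullet> (A t *v \<xi>) + (\<Sum>k=1..l. w k * (d k - a k \<bullet> \<xi>)) \<le> M i t)" for i t w
    have exP: "\<exists>w. P i t w" if it: "i \<in> {1..N}" "t \<in> {1..T}" for i t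
    proof -
      have conc: "\<forall>y z \<theta>. 0\<le>\<theta> \<and> \<theta>\<le>1 \<longrightarrow>
          \<theta> * ((v i t - x) \<bullet> y - y \<bullet> (A t *v y)) + (1-\<theta>) * ((v i t - x) \<bullet> z - z \<bullet> (A t *v z))
          \<le> (v i t - x) \<bullet> (\<theta> *\<^sub>R y + (1-\<theta>) *\<^sub>R z) - (\<theta> *\<^sub>R y + (1-\<theta>) *\<^sub>R z) \<bullet> (A t *v (\<theta> *\<^sub>R y + (1-\<theta>) *\<^sub>R z))"
      proof (intro allI impI)
        fix y z :: "real^'n" and \<theta> :: real assume th: "0\<le>\<theta> \<and> \<theta>\<le>1"
        have "0 \<le> \<theta> * (1-\<theta>) * ((y - z) \<bullet> (A t *v (y - z)))"
          using th Qnn[OF it(2)] by simp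
        then show "\<theta> * ((v i t - x) \<bullet> y - y \<bullet> (A t *v y)) + (1-\<theta>) * ((v i t - x) \<bullet> z - z \<bullet> (A t *v z))
          \<le> (v i t - x) \<bullet> (\<theta> *\<^sub>R y + (1-\<theta>) *\<^sub>R z) - (\<theta> *\<^sub>R y + (1-\<theta>) *\<^sub>R z) \<bullet> (A t *v (\<theta> *\<^sub>R y + (1-\<theta>) *\<^sub>R z))"
          using quad_concave[of \<theta> y "A t" z] by (simp add: inner_add_right algebra_simps)
      qed
      have slater: "\<forall>k\<in>{1..l}. a k \<bullet> 0 < d k" using assms(8) by simp
      have bnd: "\<forall>\<xi>. (\<forall>k\<in>{1..l}. a k \<bullet> \<xi> \<le> d k) \<longrightarrow> (v i t - x) \<bullet> \<xi> - \<xi> \<bullet> (A t *v \<xi>) \<le> M i t"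
      proof (intro allI impI)
        fix \<xi> assume "\<forall>k\<in>{1..l}. a k \<bullet> \<xi> \<le> d k"
        then have "\<xi> \<in> \<Xi>" using assms(7) by simp
        then have "v i t \<bullet> \<xi> - f t x \<xi> \<le> - (\<alpha> t - v i t \<bullet> \<zeta> i - q i t)"
          using H3 it by (intro sup_le2) auto
        then show "(v i t - x) \<bullet> \<xi> - \<xi> \<bullet> (A t *v \<xi>) \<le> M i t"
          unfolding fq M_def by (simp add: inner_diff_left inner_diff_right inner_commute)
      qed
      show ?thesis unfolding P_def
        using multi_constraint[OF _ conc slater bnd] by simp
    qed
    define \<nu> where "\<nu> i t = (SOME w. P i t w)" for i t
    have nuP: "P i t (\<nu> i t)" if "i \<in> {1..N}" "t \<in> {1..T}" for i t
      unfolding \<nu>_def using exP[OF that] by (rule someI_ex)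
    show "x \<in> {x. \<exists>(\<alpha>::nat \<Rightarrow> real) (q::nat \<Rightarrow> nat \<Rightarrow> real) (v::nat \<Rightarrow> nat \<Rightarrow> real^'n)
          (u::nat \<Rightarrow> nat \<Rightarrow> real) (\<nu>::nat \<Rightarrow> nat \<Rightarrow> nat \<Rightarrow> real).
        (\<forall>t\<in>{1..T}. 0 < \<alpha> t) \<and>
        (\<forall>i\<in>{1..N}. \<forall>t\<in>{1..T}. 0 \<le> q i t) \<and>
        (\<forall>i\<in>{1..N}. \<forall>t\<in>{1..T}. \<forall>k\<in>{1..l}. 0 \<le> \<nu> i t k) \<and>
        (\<forall>i\<in>{1..N}. \<forall>t\<in>{1..T}.
            dual_norm nrm (v i t) * \<delta> + (1 / real N) * (\<Sum>j=1..N. q j t) \<le> \<epsilon> * \<alpha> t \<and>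
            u i t - (b t \<bullet> x + h t) + \<alpha> t - v i t \<bullet> \<zeta> i \<le> q i t \<and>
            psd (block_mat (A t)
                   (- (1/2) *\<^sub>R (v i t - x - (\<Sum>k=1..l. \<nu> i t k *\<^sub>R a k)))
                   (u i t - (\<Sum>k=1..l. \<nu> i t k * d k))))}"
    proof -
      have G1: "\<forall>i\<in>{1..N}. \<forall>t\<in>{1..T}. \<forall>k\<in>{1..l}. 0 \<le> \<nu> i t k"
        using nuP by (simp add: P_def)
      have G2: "dual_norm nrm (v i t) * \<delta> + (1 / real N) * (\<Sum>j=1..N. q j t) \<le> \<epsilon> * \<alpha> t \<and>
            M i t - (b t \<bullet> x + h t) + \<alpha> t - v i t \<bullet> \<zeta> i \<le> q i t \<and>
            psd (block_mat (A t)
                   (- (1/2) *\<^sub>R (v i t - x - (\<Sum>k=1..l. \<nu> i t k *\<^sub>R a k)))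
                   (M i t - (\<Sum>k=1..l. \<nu> i t k * d k)))"
        if it: "i \<in> {1..N}" "t \<in> {1..T}" for i t
      proof (intro conjI)
        show "dual_norm nrm (v i t) * \<delta> + (1 / real N) * (\<Sum>j=1..N. q j t) \<le> \<epsilon> * \<alpha> t"
          using H3 it by blast
        show "M i t - (b t \<bullet> x + h t) + \<alpha> t - v i t \<bullet> \<zeta> i \<le> q i t" by (simp add: M_def)
        have "\<forall>\<xi>. (v i t - x - (\<Sum>k=1..l. \<nu> i t k *\<^sub>R a k)) \<bullet> \<xi> - \<xi> \<bullet> (A t *v \<xi>)
               \<le> M i t - (\<Sum>k=1..l. \<nu> i t k * d k)"
        proof
          fix \<xi>
          have "(v i t - x) \<bullet> \<xi> - \<xi> \<bullet> (A t *v \<xi>) + (\<Sum>k=1..l. \<nu> i t k * (d k - a k \<bullet> \<xi>)) \<le> M i t"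
            using nuP[OF it] by (simp add: P_def)
          then show "(v i t - x - (\<Sum>k=1..l. \<nu> i t k *\<^sub>R a k)) \<bullet> \<xi> - \<xi> \<bullet> (A t *v \<xi>)
               \<le> M i t - (\<Sum>k=1..l. \<nu> i t k * d k)"
            unfolding sumsplit inner_diff_left sumlin by linarith
        qed
        then show "psd (block_mat (A t) (- (1/2) *\<^sub>R (v i t - x - (\<Sum>k=1..l. \<nu> i t k *\<^sub>R a k)))
                     (M i t - (\<Sum>k=1..l. \<nu> i t k * d k)))"
          using blk_psd[OF Ps[OF it(2)]] by blast
      qed
      show ?thesis unfolding mem_Collect_eq
        by (intro exI[of _ \<alpha>] exI[of _ q] exI[of _ v] exI[of _ M] exI[of _ \<nu>]) (use H1 H2 G1 G2 in blast)
    qed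
  next
    fix x assume "x \<in> {x. \<exists>(\<alpha>::nat \<Rightarrow> real) (q::nat \<Rightarrow> nat \<Rightarrow> real) (v::nat \<Rightarrow> nat \<Rightarrow> real^'n)
          (u::nat \<Rightarrow> nat \<Rightarrow> real) (\<nu>::nat \<Rightarrow> nat \<Rightarrow> nat \<Rightarrow> real).
        (\<forall>t\<in>{1..T}. 0 < \<alpha> t) \<and>
        (\<forall>i\<in>{1..N}. \<forall>t\<in>{1..T}. 0 \<le> q i t) \<and>
        (\<forall>i\<in>{1..N}. \<forall>t\<in>{1..T}. \<forall>k\<in>{1..l}. 0 \<le> \<nu> i t k) \<and>
        (\<forall>i\<in>{1..N}. \<forall>t\<in>{1..T}.
            dual_norm nrm (v i t) * \<delta> + (1 / real N) * (\<Sum>j=1..N. q j t) \<le> \<epsilon> * \<alpha> t \<and>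
            u i t - (b t \<bullet> x + h t) + \<alpha> t - v i t \<bullet> \<zeta> i \<le> q i t \<and>
            psd (block_mat (A t)
                   (- (1/2) *\<^sub>R (v i t - x - (\<Sum>k=1..l. \<nu> i t k *\<^sub>R a k)))
                   (u i t - (\<Sum>k=1..l. \<nu> i t k * d k))))}"
    then obtain \<alpha> q v u \<nu> where H1: "\<forall>t\<in>{1..T}. 0 < \<alpha> t" and H2: "\<forall>i\<in>{1..N}. \<forall>t\<in>{1..T}. 0 \<le> q i t"
      and H4: "\<forall>i\<in>{1..N}. \<forall>t\<in>{1..T}. \<forall>k\<in>{1..l}. 0 \<le> \<nu> i t k"
      and H3: "\<forall>i\<in>{1..N}. \<forall>t\<in>{1..T}.
            dual_norm nrm (v i t) * \<delta> + (1 / real N) * (\<Sum>j=1..N. q j t) \<le> \<epsilon> * \<alpha> t \<and>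
            u i t - (b t \<bullet> x + h t) + \<alpha> t - v i t \<bullet> \<zeta> i \<le> q i t \<and>
            psd (block_mat (A t)
                   (- (1/2) *\<^sub>R (v i t - x - (\<Sum>k=1..l. \<nu> i t k *\<^sub>R a k)))
                   (u i t - (\<Sum>k=1..l. \<nu> i t k * d k)))" by blast
    show "x \<in> {x. \<exists>(\<alpha>::nat \<Rightarrow> real) (q::nat \<Rightarrow> nat \<Rightarrow> real) (v::nat \<Rightarrow> nat \<Rightarrow> real^'n).
        (\<forall>t\<in>{1..T}. 0 < \<alpha> t) \<and>
        (\<forall>i\<in>{1..N}. \<forall>t\<in>{1..T}. 0 \<le> q i t) \<and>
        (\<forall>i\<in>{1..N}. \<forall>t\<in>{1..T}.
            dual_norm nrm (v i t) * \<delta> + (1 / real N) * (\<Sum>j=1..N. q j t) \<le> \<epsilon> * \<alpha> t \<and>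
            (SUP \<xi>\<in>\<Xi>. ereal (v i t \<bullet> \<xi> - f t x \<xi>))
               + ereal (\<alpha> t - v i t \<bullet> \<zeta> i - q i t) \<le> 0)}"
    proof (intro CollectI exI[of _ \<alpha>] exI[of _ q] exI[of _ v] conjI H1 H2 ballI)
      fix i t assume it: "i \<in> {1..N}" "t \<in> {1..T}"
      show "dual_norm nrm (v i t) * \<delta> + (1 / real N) * (\<Sum>j=1..N. q j t) \<le> \<epsilon> * \<alpha> t"
        using H3 it by blast
      have uq: "u i t - (b t \<bullet> x + h t) + \<alpha> t - v i t \<bullet> \<zeta> i \<le> q i t" using H3 it by blast
      have W: "\<forall>\<xi>. (v i t - x - (\<Sum>k=1..l. \<nu> i t k *\<^sub>R a k)) \<bullet> \<xi> - \<xi> \<bullet> (A t *v \<xi>)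
             \<le> u i t - (\<Sum>k=1..l. \<nu> i t k * d k)"
        using H3 it blk_psd[OF Ps[OF it(2)]] by blast
      show "(SUP \<xi>\<in>\<Xi>. ereal (v i t \<bullet> \<xi> - f t x \<xi>)) + ereal (\<alpha> t - v i t \<bullet> \<zeta> i - q i t) \<le> 0"
      proof (rule sup_le1, intro ballI)
        fix \<xi> assume "\<xi> \<in> \<Xi>"
        then have fe: "\<forall>k\<in>{1..l}. a k \<bullet> \<xi> \<le> d k" using assms(7) by simp
        have "0 \<le> (\<Sum>k=1..l. \<nu> i t k * (d k - a k \<bullet> \<xi>))"
          using fe H4 it by (intro sum_nonneg) auto
        moreover have "(v i t - x - (\<Sum>k=1..l. \<nu> i t k *\<^sub>R a k)) \<bullet> \<xi> - \<xi> \<bullet> (A t *v \<xi>)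
             \<le> u i t - (\<Sum>k=1..l. \<nu> i t k * d k)" using W by blast
        ultimately have "(v i t - x) \<bullet> \<xi> - \<xi> \<bullet> (A t *v \<xi>) \<le> u i t"
          unfolding sumsplit inner_diff_left sumlin by linarith
        then show "v i t \<bullet> \<xi> - f t x \<xi> \<le> - (\<alpha> t - v i t \<bullet> \<zeta> i - q i t)"
          using uq unfolding fq by (simp add: inner_diff_left inner_diff_right inner_commute)
      qed
    qed
  qed
qed

end
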